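(* Let $0\le s<n$, $A\in M_{s+1,n-s}$ and $2\le j\le n-s$. There is a constant $K>0$ depending only on $A$ (and $n,j$) such that for all $w\in\mathcal S_{n+1,j}$: $$\max_{0\le i\le s}\ \max_{J\subset\{0,\dots,n\},\,\#J=j-1}\big|\langle(e_i+a_i)\wedge e_J,w\rangle\big|\le K\|R_Ac(w)\|$$ and $$\|R_Ac(w)\|\le K\max_{0\le i\le s}\ \max_{J\subset\{i+1,\dots,n\},\,\#J=j-1}\big|\langle(e_i+a_i)\wedge e_J,w\rangle\big|.$$
   Context: $V=\mathbb R^{n+1}$ with basis $e_0,\dots,e_n$, $V_0=\mathrm{span}(e_1,\dots,e_n)$; $e_J=e_{j_1}\wedge\dots\wedge e_{j_m}$ for $J=\{j_1<\dots<j_m\}$; $\bigwedge(V)$ carries the inner product making $\{e_J\}$ orthonormal. $\mathcal S_{n+1,j}$ is the set of $w=v_1\wedge\dots\wedge v_j$ with $v_1,\dots,v_j\in\mathbb Z^{n+1}$ linearly independent. Rows of $A$ are indexed $0,\dots,s$, columns $s+1,\dots,n$; $a_i=\sum_{k=s+1}^na_{i,k}e_k\in V$. $R_Ac(w)\in(\bigwedge^{j-1}V_0)^{s+1}$ is the vector whose $i$-th component is $\sum_{J\subset\{1,\dots,n\},\#J=j-1}\langle(e_i+a_i)\wedge e_J,w\rangle e_J$, with the Euclidean norm. *)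

theory Defs
  imports Complex_Main "HOL-Combinatorics.Permutations"
begin

text \<open>Vectors of V = R^(n+1) are functions nat => real (components 0..n used).
  Multivectors of degree j are coefficient functions on index sets I (card I = j),
  i.e. w = sum_I w(I) e_I.\<close>

definition ldet :: "nat \<Rightarrow> (nat \<Rightarrow> nat \<Rightarrow> real) \<Rightarrow> real" where
  "ldet m M = (\<Sum>p | p permutes {..<m}. of_int (sign p) * (\<Prod>r<m. M r (p r)))"

definition wedge :: "(nat \<Rightarrow> real) list \<Rightarrow> nat set \<Rightarrow> real" where
  "wedge vs I = (if finite I \<and> card I = length vs
      then ldet (length vs) (\<lambda>r c. (vs ! r) (sorted_list_of_set I ! c)) else 0)"

definition evec :: "nat \<Rightarrow> nat \<Rightarrow> real" where
  "evec k = (\<lambda>l. if l = k then 1 else 0)"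

definition mv_inner :: "nat \<Rightarrow> nat \<Rightarrow> (nat set \<Rightarrow> real) \<Rightarrow> (nat set \<Rightarrow> real) \<Rightarrow> real" where
  "mv_inner n j x y = (\<Sum>I\<in>{I. I \<subseteq> {0..n} \<and> card I = j}. x I * y I)"

definition avec :: "nat \<Rightarrow> nat \<Rightarrow> (nat \<Rightarrow> nat \<Rightarrow> real) \<Rightarrow> nat \<Rightarrow> nat \<Rightarrow> real" where
  "avec n s A i = (\<lambda>k. if s < k \<and> k \<le> n then A i k else 0)"

definition pairing :: "nat \<Rightarrow> nat \<Rightarrow> nat \<Rightarrow> (nat \<Rightarrow> nat \<Rightarrow> real) \<Rightarrow> nat \<Rightarrow> nat set
    \<Rightarrow> (nat set \<Rightarrow> real) \<Rightarrow> real" where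
  "pairing n j s A i J w =
     mv_inner n j (wedge ((\<lambda>k. evec i k + avec n s A i k) # map evec (sorted_list_of_set J))) w"

text \<open>Euclidean norm of R_A c(w) in (wedge^{j-1} V_0)^{s+1}.\<close>
definition RAc_norm :: "nat \<Rightarrow> nat \<Rightarrow> nat \<Rightarrow> (nat \<Rightarrow> nat \<Rightarrow> real) \<Rightarrow> (nat set \<Rightarrow> real) \<Rightarrow> real" where
  "RAc_norm n j s A w =
     sqrt (\<Sum>i\<le>s. \<Sum>J\<in>{J. J \<subseteq> {1..n} \<and> card J = j - 1}. (pairing n j s A i J w)\<^sup>2)"

definition S_int :: "nat \<Rightarrow> nat \<Rightarrow> (nat set \<Rightarrow> real) set" where
  "S_int n j = {w. \<exists>vs. length vs = j
      \<and> (\<forall>v\<in>set vs. (\<forall>k\<le>n. v k \<in> \<int>) \<and> (\<forall>k>n. v k = 0))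
      \<and> (\<forall>c::nat \<Rightarrow> real. (\<forall>k. (\<Sum>r<j. c r * (vs ! r) k) = 0) \<longrightarrow> (\<forall>r<j. c r = 0))
      \<and> w = wedge vs}"

end

theory Submission
  imports Defs
begin

lemma ldet_permute_rows:
  assumes q: "q permutes {..<m}"
  shows "ldet m (\<lambda>r c. M (q r) c) = of_int (sign q) * ldet m M"
proof -
  let ?U = "{..<m}"
  let ?PU = "{p. p permutes ?U}"
  have *: "(\<Sum>p\<in>?PU. of_int (sign q) * (of_int (sign (p \<circ> q)) * (\<Prod>r<m. M (q r) ((p \<circ> q) r)))) =
           (\<Sum>p\<in>?PU. of_int (sign p) * (\<Prod>r<m. M r (p r)))"
  proof (rule sum.cong)
    fix p assume "p \<in> ?PU"
    then have p: "p permutes ?U" by blast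
    have "(\<Prod>r<m. M (q r) ((p \<circ> q) r)) = prod ((\<lambda>r. M (q r) ((p \<circ> q) r)) \<circ> inv q) ?U"
      by (simp only: prod.permute[OF permutes_inv[OF q], symmetric])
    also have "\<dots> = (\<Prod>r<m. M r (p r))"
      by (simp add: o_def permutes_inverses[OF q])
    finally have th: "(\<Prod>r<m. M (q r) ((p \<circ> q) r)) = (\<Prod>r<m. M r (p r))" .
    have pp: "permutation p" and qp: "permutation q"
      using p q by (metis finite_lessThan permutation_permutes)+
    have ss: "sign q * sign q = 1" by (simp add: sign_def)
    show "of_int (sign q) * (of_int (sign (p \<circ> q)) * (\<Prod>r<m. M (q r) ((p \<circ> q) r))) =
          of_int (sign p) * (\<Prod>r<m. M r (p r))"
    proof -
      have ss': "real_of_int (sign q) * real_of_int (sign q) = 1" using ss by (metis of_int_1 of_int_mult)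
      have "of_int (sign q) * (of_int (sign (p \<circ> q)) * (\<Prod>r<m. M (q r) ((p \<circ> q) r)))
         = (real_of_int (sign q) * real_of_int (sign q)) * (of_int (sign p) * (\<Prod>r<m. M r (p r)))"
        unfolding th sign_compose[OF pp qp] by (simp add: algebra_simps)
      then show ?thesis using ss' by simp
    qed
  qed auto
  have "of_int (sign q) * ldet m (\<lambda>r c. M (q r) c)
      = (\<Sum>p\<in>?PU. of_int (sign q) * (of_int (sign p) * (\<Prod>r<m. M (q r) (p r))))"
    by (simp add: ldet_def sum_distrib_left)
  also have "\<dots> = (\<Sum>p\<in>?PU. of_int (sign q) * (of_int (sign (p \<circ> q)) * (\<Prod>r<m. M (q r) ((p \<circ> q) r))))"
    by (subst sum_permutations_compose_right[OF q]) simp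
  also have "\<dots> = ldet m M" using * by (simp add: ldet_def)
  finally have "of_int (sign q) * ldet m (\<lambda>r c. M (q r) c) = ldet m M" .
  moreover have "of_int (sign q) * (of_int (sign q) :: real) = 1"
    by (simp add: sign_def)
  ultimately show ?thesis by (metis mult.assoc mult.left_neutral)
qed

lemma ldet_row_lin:
  fixes S :: "'k set"
  assumes "r0 < m" "finite S"
  shows "ldet m (\<lambda>r c. if r = r0 then x c + (\<Sum>k\<in>S. a k * g k c) else M r c)
       = ldet m (\<lambda>r c. if r = r0 then x c else M r c)
         + (\<Sum>k\<in>S. a k * ldet m (\<lambda>r c. if r = r0 then g k c else M r c))"
proof -
  have split: "(\<Prod>r<m. f r) = f r0 * (\<Prod>r\<in>{..<m}-{r0}. f r)" for f :: "nat \<Rightarrow> real"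
    using assms(1) by (simp add: prod.remove)
  have eq: "\<And>h. (\<Prod>r\<in>{..<m}-{r0}. (if r = r0 then h r else M r (p r))) = (\<Prod>r\<in>{..<m}-{r0}. M r (p r))" for p
    by (rule prod.cong) auto
  show ?thesis
    unfolding ldet_def
    apply (subst (1 2) split)
    apply (subst split)
    apply (simp add: eq sum_distrib_left sum_distrib_right distrib_right distrib_left sum.distrib)
    apply (subst sum.swap)
    apply (simp add: algebra_simps)
    done
qed

lemma ldet_cong:
  assumes "\<And>r c. r < m \<Longrightarrow> M r c = M' r c"
  shows "ldet m M = ldet m M'"
  unfolding ldet_def by (intro sum.cong refl arg_cong2[where f="(*)"] prod.cong) (auto simp: assms)

definition Fw :: "nat \<Rightarrow> nat \<Rightarrow> (nat set \<Rightarrow> real) \<Rightarrow> (nat \<Rightarrow> real) list \<Rightarrow> real" where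
  "Fw n j w xs = mv_inner n j (wedge xs) w"

lemma wedge_zero: "\<not> (finite I \<and> card I = length vs) \<Longrightarrow> wedge vs I = 0"
  unfolding wedge_def by auto

lemma wedge_permute:
  assumes p: "p permutes {..<length xs}"
  shows "wedge (permute_list p xs) I = of_int (sign p) * wedge xs I"
proof (cases "finite I \<and> card I = length xs")
  case True
  have "ldet (length xs) (\<lambda>r c. (permute_list p xs ! r) (sorted_list_of_set I ! c))
      = ldet (length xs) (\<lambda>r c. (xs ! p r) (sorted_list_of_set I ! c))"
    by (rule ldet_cong) (simp add: permute_list_nth[OF p])
  also have "\<dots> = of_int (sign p) * ldet (length xs) (\<lambda>r c. (xs ! r) (sorted_list_of_set I ! c))"
    by (rule ldet_permute_rows[OF p])
  finally show ?thesis using True by (simp add: wedge_def)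
next
  case False then show ?thesis by (simp add: wedge_zero)
qed

lemma Fw_permute:
  assumes p: "p permutes {..<length xs}"
  shows "Fw n j w (permute_list p xs) = of_int (sign p) * Fw n j w xs"
  unfolding Fw_def mv_inner_def wedge_permute[OF p] by (simp add: sum_distrib_left mult.assoc)

lemma Fw_zero:
  assumes "r1 \<noteq> r2" "r1 < length xs" "r2 < length xs" "xs ! r1 = xs ! r2"
  shows "Fw n j w xs = 0"
proof -
  have p: "transpose r1 r2 permutes {..<length xs}"
    using assms by (simp add: permutes_swap_id)
  have "permute_list (transpose r1 r2) xs = xs"
    using assms by (intro nth_equalityI) (auto simp: permute_list_nth[OF p] transpose_def)
  then have "Fw n j w xs = of_int (sign (transpose r1 r2)) * Fw n j w xs"
    using Fw_permute[OF p, of n j w] by simp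
  then show ?thesis using assms(1) by (simp add: sign_swap_id)
qed

lemma wedge_lin:
  assumes "r0 < length xs" "finite S"
  shows "wedge (xs[r0 := (\<lambda>t. x t + (\<Sum>k\<in>S. a k * g k t))]) I
       = wedge (xs[r0 := x]) I + (\<Sum>k\<in>S. a k * wedge (xs[r0 := g k]) I)"
proof (cases "finite I \<and> card I = length xs")
  case True
  let ?s = "sorted_list_of_set I"
  let ?m = "length xs"
  have e1: "ldet ?m (\<lambda>r c. (xs[r0 := (\<lambda>t. x t + (\<Sum>k\<in>S. a k * g k t))] ! r) (?s ! c))
     = ldet ?m (\<lambda>r c. if r = r0 then x (?s ! c) + (\<Sum>k\<in>S. a k * g k (?s ! c)) else (xs ! r) (?s ! c))"
    by (rule ldet_cong) (simp add: nth_list_update)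
  have e2: "ldet ?m (\<lambda>r c. (xs[r0 := x] ! r) (?s ! c))
     = ldet ?m (\<lambda>r c. if r = r0 then x (?s ! c) else (xs ! r) (?s ! c))"
    by (rule ldet_cong) (simp add: nth_list_update)
  have e3: "ldet ?m (\<lambda>r c. (xs[r0 := g k] ! r) (?s ! c))
     = ldet ?m (\<lambda>r c. if r = r0 then g k (?s ! c) else (xs ! r) (?s ! c))" for k
    by (rule ldet_cong) (simp add: nth_list_update)
  show ?thesis using True
    unfolding wedge_def length_list_update
    by (simp add: e1 e2 e3 ldet_row_lin[OF assms])
next
  case False then show ?thesis by (simp add: wedge_zero)
qed

lemma Fw_lin:
  assumes "r0 < length xs" "finite S"
  shows "Fw n j w (xs[r0 := (\<lambda>t. x t + (\<Sum>k\<in>S. a k * g k t))])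
       = Fw n j w (xs[r0 := x]) + (\<Sum>k\<in>S. a k * Fw n j w (xs[r0 := g k]))"
  unfolding Fw_def mv_inner_def wedge_lin[OF assms]
  by (simp add: sum.distrib distrib_right sum_distrib_left sum_distrib_right mult.assoc sum.swap[of _ S])

definition uvec :: "nat \<Rightarrow> nat \<Rightarrow> (nat \<Rightarrow> nat \<Rightarrow> real) \<Rightarrow> nat \<Rightarrow> nat \<Rightarrow> real" where
  "uvec n s A i = (\<lambda>k. evec i k + avec n s A i k)"

definition bad :: "nat \<Rightarrow> nat list \<Rightarrow> nat" where
  "bad i ks = card {t. t < length ks \<and> ks ! t \<le> i}"

lemma pairing_Fw: "pairing n j s A i J w = Fw n j w (uvec n s A i # map evec (sorted_list_of_set J))"
  by (simp add: pairing_def Fw_def uvec_def)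

lemma avec_sum: "avec n s A i = (\<lambda>t. \<Sum>k\<in>{s<..n}. A i k * evec k t)"
proof (rule ext)
  fix t
  have "(\<Sum>k\<in>{s<..n}. A i k * evec k t) = (\<Sum>k\<in>{s<..n}. if t = k then A i k else 0)"
    by (rule sum.cong) (auto simp: evec_def)
  also have "\<dots> = avec n s A i t" by (simp add: avec_def)
  finally show "avec n s A i t = (\<Sum>k\<in>{s<..n}. A i k * evec k t)" by simp
qed

lemma uvec_D1: "uvec n s A i = (\<lambda>t. evec i t + (\<Sum>k\<in>{s<..n}. A i k * evec k t))"
  by (simp add: uvec_def avec_sum)

lemma uvec_D2: "evec l = (\<lambda>t. uvec n s A l t + (\<Sum>k\<in>{s<..n}. (- A l k) * evec k t))"
  by (rule ext) (simp add: uvec_def avec_sum sum_negf)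

lemma list_L1: "r < length ks \<Longrightarrow> (u # map evec ks)[Suc r := evec k] = u # map evec (ks[r:=k])"
  by (simp add: map_update)

lemma permute_list_nth': "i < length xs \<Longrightarrow> permute_list f xs ! i = xs ! (f i)"
  by (simp add: permute_list_def)

lemma list_L2:
  assumes "r < length ks"
  shows "permute_list (transpose 0 (Suc r)) ((x # map evec ks)[Suc r := y]) = (y # map evec ks)[Suc r := x]"
proof (rule nth_equalityI)
  show "length (permute_list (transpose 0 (Suc r)) ((x # map evec ks)[Suc r := y])) = length ((y # map evec ks)[Suc r := x])"
    by simp
  fix t assume t: "t < length (permute_list (transpose 0 (Suc r)) ((x # map evec ks)[Suc r := y]))"
  then have t': "t < Suc (length ks)" by simp
  have "permute_list (transpose 0 (Suc r)) ((x # map evec ks)[Suc r := y]) ! t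
      = ((x # map evec ks)[Suc r := y]) ! (transpose 0 (Suc r) t)"
    by (rule permute_list_nth') (use t' in simp)
  moreover have "((x # map evec ks)[Suc r := y]) ! (transpose 0 (Suc r) t) = ((y # map evec ks)[Suc r := x]) ! t"
  proof (cases "t = 0")
    case True then show ?thesis using assms by (simp add: transpose_def nth_list_update)
  next
    case False
    then obtain t0 where t0: "t = Suc t0" by (cases t) auto
    show ?thesis
    proof (cases "t0 = r")
      case True then show ?thesis using assms t0 by (simp add: transpose_def)
    next
      case False then show ?thesis using assms t0 t' by (simp add: transpose_def nth_list_update)
    qed
  qed
  ultimately show "permute_list (transpose 0 (Suc r)) ((x # map evec ks)[Suc r := y]) ! t = ((y # map evec ks)[Suc r := x]) ! t"
    by simp
qed

lemma bad_upd:
  assumes "r < length ks" "ks ! r \<le> i" "l \<le> i" "l < k"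
  shows "bad l (ks[r:=k]) < bad i ks"
proof -
  have "{t. t < length (ks[r:=k]) \<and> ks[r:=k] ! t \<le> l} \<subset> {t. t < length ks \<and> ks ! t \<le> i}"
    using assms by (auto simp: nth_list_update)
  then show ?thesis unfolding bad_def by (intro psubset_card_mono) auto
qed

lemma bad_le: "bad i ks \<le> length ks"
proof -
  have "bad i ks \<le> card {..<length ks}" unfolding bad_def by (intro card_mono) auto
  then show ?thesis by simp
qed

lemma abs_sign: "\<bar>real_of_int (sign p)\<bar> = 1"
  by (simp add: sign_def)

lemma sum_bound:
  fixes f :: "nat \<Rightarrow> real"
  assumes "\<And>k. k \<in> K \<Longrightarrow> \<bar>f k\<bar> \<le> B" "(\<Sum>k\<in>K. \<bar>c k\<bar>) \<le> S" "0 \<le> B"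
  shows "\<bar>\<Sum>k\<in>K. c k * f k\<bar> \<le> S * B"
proof -
  have "\<bar>\<Sum>k\<in>K. c k * f k\<bar> \<le> (\<Sum>k\<in>K. \<bar>c k\<bar> * \<bar>f k\<bar>)"
    by (metis (no_types, lifting) abs_mult sum.cong sum_abs)
  also have "\<dots> \<le> (\<Sum>k\<in>K. \<bar>c k\<bar> * B)"
    by (intro sum_mono mult_left_mono assms(1)) auto
  also have "\<dots> = (\<Sum>k\<in>K. \<bar>c k\<bar>) * B" by (simp add: sum_distrib_right)
  also have "\<dots> \<le> S * B" by (intro mult_right_mono assms)
  finally show ?thesis .
qed

lemma main_bound:
  fixes M C S :: real
  assumes M0: "0 \<le> M" and sn: "s \<le> n"
    and good: "\<And>i J. i \<le> s \<Longrightarrow> J \<subseteq> {i+1..n} \<Longrightarrow> card J = j - 1 \<Longrightarrow> \<bar>pairing n j s A i J w\<bar> \<le> M"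
    and SA: "\<And>l. l \<le> s \<Longrightarrow> (\<Sum>k\<in>{s<..n}. \<bar>A l k\<bar>) \<le> S"
    and C: "C = 1 + 2 * S"
  shows "i \<le> s \<Longrightarrow> length ks = j - 1 \<Longrightarrow> set ks \<subseteq> {0..n} \<Longrightarrow> bad i ks \<le> b
     \<Longrightarrow> \<bar>Fw n j w (uvec n s A i # map evec ks)\<bar> \<le> C^b * M"
proof (induction b arbitrary: i ks)
  have S0: "0 \<le> S" using SA[of 0] by (meson order_trans sum_nonneg abs_ge_zero le0)
  case 0
  have allgt: "i < ks ! t" if "t < length ks" for t
  proof -
    have "finite {t. t < length ks \<and> ks ! t \<le> i}" by simp
    then have "{t. t < length ks \<and> ks ! t \<le> i} = {}" using 0(4) unfolding bad_def by simp
    then show ?thesis using that by auto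
  qed
  show ?case
  proof (cases "distinct ks")
    case True
    define J where "J = set ks"
    have cJ: "card J = j - 1" using True 0(2) by (simp add: J_def distinct_card)
    have sJ: "J \<subseteq> {i+1..n}"
    proof
      fix x assume "x \<in> J"
      then obtain t where "t < length ks" "x = ks ! t" unfolding J_def by (auto simp: in_set_conv_nth)
      then show "x \<in> {i+1..n}" using allgt[of t] 0(3) nth_mem[of t ks] by fastforce
    qed
    have "mset (sorted_list_of_set J) = mset ks"
      using True by (simp add: J_def sorted_list_of_set_sort_remdups distinct_remdups_id)
    then have "mset (uvec n s A i # map evec ks) = mset (uvec n s A i # map evec (sorted_list_of_set J))"
      by (metis mset.simps(2) mset_map)
    then obtain p where p: "p permutes {..<length (uvec n s A i # map evec (sorted_list_of_set J))}"
      "permute_list p (uvec n s A i # map evec (sorted_list_of_set J)) = uvec n s A i # map evec ks"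
      by (rule mset_eq_permutation)
    have "\<bar>Fw n j w (uvec n s A i # map evec ks)\<bar> = \<bar>Fw n j w (uvec n s A i # map evec (sorted_list_of_set J))\<bar>"
      using Fw_permute[OF p(1), of n j w] p(2) by (simp add: abs_mult abs_sign)
    also have "\<dots> = \<bar>pairing n j s A i J w\<bar>" by (simp add: pairing_Fw)
    also have "\<dots> \<le> M" using good[OF 0(1) sJ cJ] .
    finally show ?thesis by simp
  next
    case False
    then obtain a b where ab: "a \<noteq> b" "a < length ks" "b < length ks" "ks ! a = ks ! b"
      by (auto simp: distinct_conv_nth)
    have "Fw n j w (uvec n s A i # map evec ks) = 0"
      by (rule Fw_zero[of "Suc a" "Suc b"]) (use ab in auto)
    then show ?thesis using M0 by simp
  qed
next
  case (Suc b)
  have S0: "0 \<le> S" using SA[of 0] by (meson order_trans sum_nonneg abs_ge_zero le0)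
  have C1: "1 \<le> C" using C S0 by simp
  have CbM: "0 \<le> C^b * M" using C1 M0 by simp
  let ?F = "Fw n j w"
  let ?u = "uvec n s A"
  let ?K = "{s<..n}"
  show ?case
  proof (cases "bad i ks \<le> b")
    case True
    then have "\<bar>?F (?u i # map evec ks)\<bar> \<le> C^b * M" using Suc by blast
    also have "\<dots> \<le> C * (C^b * M)" using C1 CbM by (simp add: mult_le_cancel_right1)
    finally show ?thesis by simp
  next
    case False
    then have "bad i ks \<noteq> 0" by simp
    then have "{t. t < length ks \<and> ks ! t \<le> i} \<noteq> {}" unfolding bad_def by (metis card.empty)
    then obtain r where r: "r < length ks" "ks ! r \<le> i" by auto
    define l where "l = ks ! r"
    have li: "l \<le> i" using r l_def by simp
    have IH: "\<bar>?F (?u i' # map evec ks')\<bar> \<le> C^b * M"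
      if "i' \<le> s" "length ks' = j - 1" "set ks' \<subseteq> {0..n}" "bad i' ks' \<le> b" for i' ks'
      using Suc.IH that by blast
    have setupd: "set (ks[r:=k]) \<subseteq> {0..n}" if "k \<le> n" for k
      using set_update_subset_insert[of ks r k] Suc.prems(3) that by auto
    have badk: "bad l' (ks[r:=k]) \<le> b" if "l' \<le> i" "l' < k" for l' k
      using bad_upd[OF r that] Suc.prems(4) by simp
    define xs where "xs = ?u i # map evec ks"
    have rl: "Suc r < length xs" using r by (simp add: xs_def)
    have "xs = xs[Suc r := evec l]" using r by (simp add: xs_def l_def map_update[symmetric])
    also have "\<dots> = xs[Suc r := (\<lambda>t. ?u l t + (\<Sum>k\<in>?K. (- A l k) * evec k t))]"
      using uvec_D2[of l n s A] by simp
    finally have "?F xs = ?F (xs[Suc r := ?u l]) + (\<Sum>k\<in>?K. (- A l k) * ?F (xs[Suc r := evec k]))"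
      using Fw_lin[OF rl, where S="?K" and x="?u l" and a="\<lambda>k. - A l k" and g=evec and n=n and j=j and w=w] by simp
    also have "\<dots> = ?F (xs[Suc r := ?u l]) + (\<Sum>k\<in>?K. (- A l k) * ?F (?u i # map evec (ks[r:=k])))"
      using r by (simp add: xs_def map_update)
    finally have Fxs: "?F xs = ?F (xs[Suc r := ?u l]) + (\<Sum>k\<in>?K. (- A l k) * ?F (?u i # map evec (ks[r:=k])))" .
    have T2: "\<bar>\<Sum>k\<in>?K. (- A l k) * ?F (?u i # map evec (ks[r:=k]))\<bar> \<le> S * (C^b * M)"
    proof (rule sum_bound)
      fix k assume k: "k \<in> ?K"
      show "\<bar>?F (?u i # map evec (ks[r:=k]))\<bar> \<le> C^b * M"
        using k Suc.prems by (intro IH setupd badk) auto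
    next
      show "(\<Sum>k\<in>?K. \<bar>- A l k\<bar>) \<le> S" using SA[of l] li Suc.prems(1) by simp
    qed (rule CbM)
    have T1: "\<bar>?F (xs[Suc r := ?u l])\<bar> \<le> (1 + S) * (C^b * M)"
    proof (cases "l = i")
      case True
      have "?F (xs[Suc r := ?u l]) = 0"
        by (rule Fw_zero[of 0 "Suc r"]) (use r True in \<open>auto simp: xs_def\<close>)
      then show ?thesis using S0 CbM by simp
    next
      case False
      then have li': "l < i" using li by simp
      have tp: "transpose 0 (Suc r) permutes {..<length (xs[Suc r := ?u l])}"
        using rl by (intro permutes_swap_id) auto
      define ys where "ys = (?u l # map evec ks)[Suc r := ?u i]"
      have "permute_list (transpose 0 (Suc r)) (xs[Suc r := ?u l]) = ys"
        unfolding xs_def ys_def by (rule list_L2[OF r(1)])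
      then have "?F ys = - ?F (xs[Suc r := ?u l])"
        using Fw_permute[OF tp, of n j w] by (simp add: sign_swap_id)
      then have eq1: "\<bar>?F (xs[Suc r := ?u l])\<bar> = \<bar>?F ys\<bar>" by simp
      have rl2: "Suc r < length (?u l # map evec ks)" using r by simp
      have "ys = (?u l # map evec ks)[Suc r := (\<lambda>t. evec i t + (\<Sum>k\<in>?K. A i k * evec k t))]"
        unfolding ys_def using uvec_D1[of n s A i] by simp
      then have "?F ys = ?F ((?u l # map evec ks)[Suc r := evec i]) + (\<Sum>k\<in>?K. A i k * ?F ((?u l # map evec ks)[Suc r := evec k]))"
        using Fw_lin[OF rl2, where S="?K" and x="evec i" and a="\<lambda>k. A i k" and g=evec and n=n and j=j and w=w] by simp
      also have "\<dots> = ?F (?u l # map evec (ks[r:=i])) + (\<Sum>k\<in>?K. A i k * ?F (?u l # map evec (ks[r:=k])))"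
        using r by (simp add: map_update)
      finally have Fys: "?F ys = ?F (?u l # map evec (ks[r:=i])) + (\<Sum>k\<in>?K. A i k * ?F (?u l # map evec (ks[r:=k])))" .
      have ls: "l \<le> s" using li Suc.prems(1) by simp
      have in_ : "i \<le> n" using Suc.prems(1) sn by simp
      have B1: "\<bar>?F (?u l # map evec (ks[r:=i]))\<bar> \<le> C^b * M"
        using Suc.prems ls li' in_ by (intro IH setupd badk) auto
      have B2: "\<bar>\<Sum>k\<in>?K. A i k * ?F (?u l # map evec (ks[r:=k]))\<bar> \<le> S * (C^b * M)"
      proof (rule sum_bound)
        fix k assume k: "k \<in> ?K"
        show "\<bar>?F (?u l # map evec (ks[r:=k]))\<bar> \<le> C^b * M"
          using k Suc.prems ls li' by (intro IH setupd badk) auto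
      next
        show "(\<Sum>k\<in>?K. \<bar>A i k\<bar>) \<le> S" using SA[of i] Suc.prems(1) by simp
      qed (rule CbM)
      have "\<bar>?F ys\<bar> \<le> \<bar>?F (?u l # map evec (ks[r:=i]))\<bar> + \<bar>\<Sum>k\<in>?K. A i k * ?F (?u l # map evec (ks[r:=k]))\<bar>"
        unfolding Fys by (rule abs_triangle_ineq)
      also have "\<dots> \<le> C^b * M + S * (C^b * M)" using B1 B2 by linarith
      also have "\<dots> = (1 + S) * (C^b * M)" by (simp add: algebra_simps)
      finally show ?thesis unfolding eq1 .
    qed
    have "\<bar>?F xs\<bar> \<le> \<bar>?F (xs[Suc r := ?u l])\<bar> + \<bar>\<Sum>k\<in>?K. (- A l k) * ?F (?u i # map evec (ks[r:=k]))\<bar>"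
      unfolding Fxs by (rule abs_triangle_ineq)
    also have "\<dots> \<le> (1 + S) * (C^b * M) + S * (C^b * M)" using T1 T2 by linarith
    also have "\<dots> = C^(Suc b) * M" using C by (simp add: algebra_simps)
    finally show ?thesis by (simp add: xs_def)
  qed
qed

theorem lemma5p5:
  fixes n s j :: nat and A :: "nat \<Rightarrow> nat \<Rightarrow> real"
  assumes "s < n" and "2 \<le> j" and "j \<le> n - s"
  shows "\<exists>K>0. \<forall>w\<in>S_int n j.
    Max {\<bar>pairing n j s A i J w\<bar> | i J. i \<le> s \<and> J \<subseteq> {0..n} \<and> card J = j - 1}
      \<le> K * RAc_norm n j s A w
    \<and> RAc_norm n j s A w
      \<le> K * Max {\<bar>pairing n j s A i J w\<bar> | i J. i \<le> s \<and> J \<subseteq> {i+1..n} \<and> card J = j - 1}"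
proof -
  define JS where "JS = {J. J \<subseteq> {1..n} \<and> card J = j - 1}"
  define N where "N = real ((s+1) * card JS)"
  define S where "S = (\<Sum>l\<le>s. \<Sum>k\<in>{s<..n}. \<bar>A l k\<bar>)"
  define C where "C = 1 + 2 * S"
  define K where "K = (1 + sqrt N) * C^(j-1)"
  have SA: "(\<Sum>k\<in>{s<..n}. \<bar>A l k\<bar>) \<le> S" if "l \<le> s" for l
    unfolding S_def using that
    by (intro member_le_sum[where f="\<lambda>l. \<Sum>k\<in>{s<..n}. \<bar>A l k\<bar>"]) (auto intro: sum_nonneg)
  have S0: "0 \<le> S" unfolding S_def by (intro sum_nonneg) auto
  have C1: "1 \<le> C" using S0 C_def by simp
  have Cp: "1 \<le> C^(j-1)" using C1 by simp
  have N0: "0 \<le> N" unfolding N_def by simp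
  have Kge: "C^(j-1) \<le> K" unfolding K_def using Cp N0 by (simp add: algebra_simps)
  have Kge2: "sqrt N * C^(j-1) \<le> K" unfolding K_def using Cp N0 by (simp add: algebra_simps)
  have Kpos: "K > 0" using Kge Cp by simp
  have fJS: "finite JS" unfolding JS_def by (rule finite_subset[of _ "Pow {1..n}"]) auto
  have j1n: "j - 1 \<le> n" using assms by simp
  have J0: "{1..j-1} \<subseteq> {0+1..n}" "card {1..j-1} = j - 1" using j1n by auto
  show ?thesis
  proof (intro exI[of _ K] conjI Kpos ballI)
    fix w assume "w \<in> S_int n j"
    let ?P = "\<lambda>i J. pairing n j s A i J w"
    define G where "G = {\<bar>?P i J\<bar> | i J. i \<le> s \<and> J \<subseteq> {i+1..n} \<and> card J = j - 1}"
    define Fs where "Fs = {\<bar>?P i J\<bar> | i J. i \<le> s \<and> J \<subseteq> {0..n} \<and> card J = j - 1}"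
    define R where "R = RAc_norm n j s A w"
    have fG: "finite G"
    proof (rule finite_subset[of _ "(\<lambda>(i,J). \<bar>?P i J\<bar>) ` ({..s} \<times> Pow {0..n})"])
      show "G \<subseteq> (\<lambda>(i,J). \<bar>?P i J\<bar>) ` ({..s} \<times> Pow {0..n})"
      proof
        fix x assume "x \<in> G"
        then obtain i J where "x = \<bar>?P i J\<bar>" "i \<le> s" "J \<subseteq> {i+1..n}" unfolding G_def by blast
        moreover have "J \<subseteq> {0..n}" using calculation(3) by auto
        ultimately show "x \<in> (\<lambda>(i,J). \<bar>?P i J\<bar>) ` ({..s} \<times> Pow {0..n})"
          by (intro image_eqI[of _ _ "(i,J)"]) auto
      qed
    qed auto
    have fF: "finite Fs"
    proof (rule finite_subset[of _ "(\<lambda>(i,J). \<bar>?P i J\<bar>) ` ({..s} \<times> Pow {0..n})"])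
      show "Fs \<subseteq> (\<lambda>(i,J). \<bar>?P i J\<bar>) ` ({..s} \<times> Pow {0..n})"
      proof
        fix x assume "x \<in> Fs"
        then obtain i J where "x = \<bar>?P i J\<bar>" "i \<le> s" "J \<subseteq> {0..n}" unfolding Fs_def by blast
        then show "x \<in> (\<lambda>(i,J). \<bar>?P i J\<bar>) ` ({..s} \<times> Pow {0..n})"
          by (intro image_eqI[of _ _ "(i,J)"]) auto
      qed
    qed auto
    have mG: "\<bar>?P 0 {1..j-1}\<bar> \<in> G" unfolding G_def using J0 by blast
    have mF: "\<bar>?P 0 {1..j-1}\<bar> \<in> Fs" unfolding Fs_def using J0 by fastforce
    define M2 where "M2 = Max G"
    have good: "\<bar>?P i J\<bar> \<le> M2" if "i \<le> s" "J \<subseteq> {i+1..n}" "card J = j - 1" for i J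
      unfolding M2_def using that fG by (intro Max_ge) (auto simp: G_def)
    have M20: "0 \<le> M2" using good[OF _ J0] by (meson abs_ge_zero order_trans le0)
    have full: "\<bar>?P i J\<bar> \<le> C^(j-1) * M2" if "i \<le> s" "J \<subseteq> {0..n}" "card J = j - 1" for i J
    proof -
      have fin: "finite J" using that(2) finite_subset by blast
      have "\<bar>Fw n j w (uvec n s A i # map evec (sorted_list_of_set J))\<bar> \<le> C^(j-1) * M2"
        using that fin bad_le[of i "sorted_list_of_set J"] assms(1)
        by (intro main_bound[OF M20 _ good SA C_def]) auto
      then show ?thesis by (simp add: pairing_Fw)
    qed
    have sq: "(?P i J)^2 \<le> (\<Sum>i\<le>s. \<Sum>J\<in>JS. (?P i J)\<^sup>2)" if "i \<le> s" "J \<in> JS" for i J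
    proof -
      have "(?P i J)^2 \<le> (\<Sum>J\<in>JS. (?P i J)\<^sup>2)"
        using that fJS by (intro member_le_sum[where f="\<lambda>J. (?P i J)\<^sup>2"]) auto
      also have "\<dots> \<le> (\<Sum>i\<le>s. \<Sum>J\<in>JS. (?P i J)\<^sup>2)"
        using that by (intro member_le_sum[where f="\<lambda>i. \<Sum>J\<in>JS. (?P i J)\<^sup>2"]) (auto intro: sum_nonneg)
      finally show ?thesis .
    qed
    have R_def': "R = sqrt (\<Sum>i\<le>s. \<Sum>J\<in>JS. (?P i J)\<^sup>2)"
      unfolding R_def RAc_norm_def JS_def by simp
    have R0: "0 \<le> R" unfolding R_def' by (intro real_sqrt_ge_zero sum_nonneg) auto
    have M2R: "M2 \<le> R"
    proof -
      have "M2 \<in> G" unfolding M2_def using fG mG by (intro Max_in) auto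
      then obtain i J where iJ: "M2 = \<bar>?P i J\<bar>" "i \<le> s" "J \<subseteq> {i+1..n}" "card J = j - 1"
        unfolding G_def by blast
      have "J \<in> JS" using iJ unfolding JS_def by auto
      then have "(?P i J)^2 \<le> (\<Sum>i\<le>s. \<Sum>J\<in>JS. (?P i J)\<^sup>2)" using sq iJ by blast
      then have "sqrt ((?P i J)^2) \<le> R" unfolding R_def' by (rule real_sqrt_le_mono)
      then show ?thesis using iJ by simp
    qed
    have ineq1: "Max Fs \<le> K * R"
    proof -
      have "Max Fs \<le> C^(j-1) * M2"
      proof (subst Max_le_iff[OF fF])
        show "Fs \<noteq> {}" using mF by blast
        show "\<forall>x\<in>Fs. x \<le> C^(j-1) * M2"
        proof
          fix x assume "x \<in> Fs"
          then obtain i J where "x = \<bar>?P i J\<bar>" "i \<le> s" "J \<subseteq> {0..n}" "card J = j - 1"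
            unfolding Fs_def by blast
          then show "x \<le> C^(j-1) * M2" using full by simp
        qed
      qed
      also have "\<dots> \<le> C^(j-1) * R" using M2R Cp by simp
      also have "\<dots> \<le> K * R" using Kge R0 by (simp add: mult_right_mono)
      finally show ?thesis .
    qed
    have ineq2: "R \<le> K * M2"
    proof -
      define X where "X = C^(j-1) * M2"
      have X0: "0 \<le> X" unfolding X_def using Cp M20 by simp
      have "(\<Sum>i\<le>s. \<Sum>J\<in>JS. (?P i J)\<^sup>2) \<le> (\<Sum>i\<le>s. \<Sum>J\<in>JS. X\<^sup>2)"
      proof (intro sum_mono)
        fix i J assume "i \<in> {..s}" "J \<in> JS"
        then have "\<bar>?P i J\<bar> \<le> X" unfolding X_def JS_def by (intro full) auto
        then show "(?P i J)\<^sup>2 \<le> X\<^sup>2" by (metis abs_ge_zero power2_abs power_mono)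
      qed
      also have "\<dots> = N * X\<^sup>2" unfolding N_def by (simp add: algebra_simps)
      finally have "R \<le> sqrt (N * X\<^sup>2)" unfolding R_def' by (rule real_sqrt_le_mono)
      also have "\<dots> = sqrt N * X" using X0 by (simp add: real_sqrt_mult)
      also have "\<dots> = (sqrt N * C^(j-1)) * M2" unfolding X_def by (simp add: mult.assoc)
      also have "\<dots> \<le> K * M2" using Kge2 M20 by (simp add: mult_right_mono)
      finally show ?thesis .
    qed
    show "Max {\<bar>pairing n j s A i J w\<bar> | i J. i \<le> s \<and> J \<subseteq> {0..n} \<and> card J = j - 1}
      \<le> K * RAc_norm n j s A w"
      using ineq1 unfolding Fs_def R_def .
    show "RAc_norm n j s A w
      \<le> K * Max {\<bar>pairing n j s A i J w\<bar> | i J. i \<le> s \<and> J \<subseteq> {i+1..n} \<and> card J = j - 1}"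
      using ineq2 unfolding G_def M2_def R_def .
  qed
qed

end
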